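(* Let $(X,d)$ be a separable geodesic Gromov-hyperbolic space with basepoint $o$, and $\mu$ a countably supported non-elementary probability measure on $\mathrm{Isom}(X)$ with finite exponential moment. Let $v(\mu)=\sup_{\xi\in\overline X^h}\mathbb E[(\sigma_0(X_1,\xi)-\ell_\mu)^2]$. Then there exists $C>0$ such that for every $\epsilon>0$ there exists $b>0$ such that for every $\lambda$ with $|\lambda|<v(\mu)/b$, every $n\in\mathbb N$ and every $x\in\overline X^h$, $$\mathbb E\big[e^{\lambda(\sigma(L_n,x)-n\ell_\mu)}\big]\le\exp\Big(\frac{\lambda^2(v(\mu)+\epsilon)n}{2}+C|\lambda|\Big).$$
   Context: Gromov-hyperbolic: $\exists\delta\ge0$, $(x|y)_o\ge\min\{(x|z)_o,(z|y)_o\}-\delta$ with $(x|y)_o=\frac12(d(x,o)+d(y,o)-d(x,y))$; non-elementary: the semigroup generated by $\mathrm{supp}\,\mu$ contains two loxodromic isometries with disjoint fixed point pairs on the Gromov boundary; $\kappa(g)=d(g\cdot o,o)$, finite exponential moment: $\int e^{\alpha\kappa}d\mu<\infty$ for some $\alpha>0$. $\overline X^h$ is the horofunction compactification (closure of $\{h_x:m\mapsto d(x,m)-d(x,o)\}$ among 1-Lipschitz functions vanishing at $o$, pointwise convergence), action $(g\cdot h)(m)=h(g^{-1}m)-h(g^{-1}o)$, Busemann cocycle $\sigma(g,h)=h(g^{-1}o)$. $X_i$ i.i.d. with law $\mu$, $L_n=X_n\cdots X_1$, $\ell_\mu=\lim\kappa(L_n)/n$ a.s. $\sigma_0(g,x):=\sigma(g,x)+\psi(g\cdot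 x)-\psi(x)$ where $\psi:\overline X^h\to\mathbb R$ is a fixed bounded measurable function (known to exist) such that $\int\sigma_0(g,x)d\mu(g)=\ell_\mu$ for all $x$. *)

theory Defs
  imports "HOL-Analysis.Analysis" "HOL-Probability.Probability"
begin

definition gromov_product :: "'a::metric_space \<Rightarrow> 'a \<Rightarrow> 'a \<Rightarrow> real" where
  "gromov_product o' x y = (dist x o' + dist y o' - dist x y) / 2"

definition gromov_hyperbolic :: "'a::metric_space \<Rightarrow> bool" where
  "gromov_hyperbolic o' \<longleftrightarrow> (\<exists>\<delta>\<ge>0. \<forall>x y z.
     gromov_product o' x y \<ge> min (gromov_product o' x z) (gromov_product o' z y) - \<delta>)"

definition geodesic_space :: "'a::metric_space itself \<Rightarrow> bool" where
  "geodesic_space _ \<longleftrightarrow> (\<forall>x y::'a. \<exists>\<gamma>::real \<Rightarrow> 'a. \<gamma> 0 = x \<and> \<gamma> (dist x y) = y \<and>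
     (\<forall>s\<in>{0..dist x y}. \<forall>t\<in>{0..dist x y}. dist (\<gamma> s) (\<gamma> t) = \<bar>s - t\<bar>))"

definition separable_space :: "'a::metric_space itself \<Rightarrow> bool" where
  "separable_space _ \<longleftrightarrow> (\<exists>D::'a set. countable D \<and> closure D = UNIV)"

definition isom :: "('a::metric_space \<Rightarrow> 'a) \<Rightarrow> bool" where
  "isom g \<longleftrightarrow> bij g \<and> (\<forall>x y. dist (g x) (g y) = dist x y)"

definition loxodromic :: "'a::metric_space \<Rightarrow> ('a \<Rightarrow> 'a) \<Rightarrow> bool" where
  "loxodromic o' g \<longleftrightarrow> isom g \<and>
     (\<exists>\<tau>>0. (\<lambda>n. dist ((g ^^ n) o') o' / real n) \<longlonglongrightarrow> \<tau>)"

definition same_boundary_point :: "'a::metric_space \<Rightarrow> (nat \<Rightarrow> 'a) \<Rightarrow> (nat \<Rightarrow> 'a) \<Rightarrow> bool" where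
  "same_boundary_point o' x y \<longleftrightarrow> filterlim (\<lambda>n. gromov_product o' (x n) (y n)) at_top sequentially"

inductive_set semigroup_gen :: "('a \<Rightarrow> 'a) set \<Rightarrow> ('a \<Rightarrow> 'a) set" for S where
  base: "g \<in> S \<Longrightarrow> g \<in> semigroup_gen S"
| comp: "g \<in> semigroup_gen S \<Longrightarrow> h \<in> semigroup_gen S \<Longrightarrow> g \<circ> h \<in> semigroup_gen S"

text \<open>Non-elementary: the semigroup generated by the support contains two loxodromic
  isometries whose fixed point pairs {g^{+},g^{-}}, {h^{+},h^{-}} on the Gromov boundary are
  disjoint; g^{\<pm>} is the boundary limit of g^{\<pm>n} o.\<close>
definition non_elementary :: "'a::metric_space \<Rightarrow> ('a \<Rightarrow> 'a) pmf \<Rightarrow> bool" where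
  "non_elementary o' \<mu> \<longleftrightarrow> (\<exists>g\<in>semigroup_gen (set_pmf \<mu>). \<exists>h\<in>semigroup_gen (set_pmf \<mu>).
     loxodromic o' g \<and> loxodromic o' h \<and>
     (\<forall>s\<in>{g, inv g}. \<forall>t\<in>{h, inv h}.
        \<not> same_boundary_point o' (\<lambda>n. (s ^^ n) o') (\<lambda>n. (t ^^ n) o')))"

definition kappa :: "'a::metric_space \<Rightarrow> ('a \<Rightarrow> 'a) \<Rightarrow> real" where
  "kappa o' g = dist (g o') o'"

definition finite_exp_moment :: "'a::metric_space \<Rightarrow> ('a \<Rightarrow> 'a) pmf \<Rightarrow> bool" where
  "finite_exp_moment o' \<mu> \<longleftrightarrow> (\<exists>\<alpha>>0. (\<integral>\<^sup>+ g. ennreal (exp (\<alpha> * kappa o' g)) \<partial>measure_pmf \<mu>) < \<infinity>)"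

definition horo_compactification :: "'a::metric_space \<Rightarrow> ('a \<Rightarrow> real) set" where
  "horo_compactification o' = closure (range (\<lambda>x m. dist x m - dist x o'))"

definition horo_action :: "'a::metric_space \<Rightarrow> ('a \<Rightarrow> 'a) \<Rightarrow> ('a \<Rightarrow> real) \<Rightarrow> ('a \<Rightarrow> real)" where
  "horo_action o' g h = (\<lambda>m. h (inv g m) - h (inv g o'))"

definition busemann :: "'a::metric_space \<Rightarrow> ('a \<Rightarrow> 'a) \<Rightarrow> ('a \<Rightarrow> real) \<Rightarrow> real" where
  "busemann o' g h = h (inv g o')"

definition busemann0 :: "'a::metric_space \<Rightarrow> (('a \<Rightarrow> real) \<Rightarrow> real) \<Rightarrow> ('a \<Rightarrow> 'a) \<Rightarrow> ('a \<Rightarrow> real) \<Rightarrow> real" where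
  "busemann0 o' \<psi> g h = busemann o' g h + \<psi> (horo_action o' g h) - \<psi> h"

text \<open>Random walk L_n = X_n \<circ> ... \<circ> X_1 on the path space of i.i.d. increments.\<close>
definition walk :: "nat \<Rightarrow> ('a \<Rightarrow> 'a) stream \<Rightarrow> ('a \<Rightarrow> 'a)" where
  "walk n \<omega> = fold (\<lambda>g acc. g \<circ> acc) (stake n \<omega>) id"

end

theory Submission
  imports Defs
begin

definition wl :: "('a \<Rightarrow> 'a) list \<Rightarrow> ('a \<Rightarrow> 'a)" where
  "wl xs = fold (\<lambda>g acc. g \<circ> acc) xs id"

lemma fold_comp_right: "fold (\<lambda>g acc. g \<circ> acc) xs (a \<circ> b) = fold (\<lambda>g acc. g \<circ> acc) xs a \<circ> b"
proof (induction xs arbitrary: a)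
  case (Cons x xs)
  have "x \<circ> (a \<circ> b) = (x \<circ> a) \<circ> b" by (simp add: comp_assoc)
  then show ?case using Cons.IH[of "x \<circ> a"] by simp
qed simp

lemma wl_Nil[simp]: "wl [] = id" by (simp add: wl_def)
lemma wl_Cons: "wl (g # xs) = wl xs \<circ> g"
  using fold_comp_right[of xs id g] by (simp add: wl_def)

lemma walk_wl: "walk n \<omega> = wl (stake n \<omega>)"
  by (simp add: walk_def wl_def)

lemma AE_streams_pmf:
  "AE \<omega> in stream_space (measure_pmf \<mu>). \<omega> \<in> streams (set_pmf \<mu>)"
proof -
  have "AE \<omega> in stream_space (measure_pmf \<mu>). stream_all (\<lambda>x. x \<in> set_pmf \<mu>) \<omega>"
    by (rule prob_space.AE_stream_all[OF prob_space_measure_pmf]) (auto simp: AE_measure_pmf)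
  then show ?thesis by (simp add: streams_iff_sset subset_eq)
qed

definition rfix :: "'b pmf \<Rightarrow> 'b \<Rightarrow> 'b" where
  "rfix \<mu> g = (if g \<in> set_pmf \<mu> then g else (SOME h. h \<in> set_pmf \<mu>))"

lemma rfix_in: "rfix \<mu> g \<in> set_pmf \<mu>"
  using set_pmf_not_empty[of \<mu>] by (auto simp: rfix_def intro: someI_ex)

lemma rfix_id: "g \<in> set_pmf \<mu> \<Longrightarrow> rfix \<mu> g = g"
  by (simp add: rfix_def)

lemma meas_stake_rfix:
  fixes G :: "'b list \<Rightarrow> ennreal"
  shows "(\<lambda>\<omega>. G (stake n (smap (rfix \<mu>) \<omega>))) \<in> borel_measurable (stream_space (measure_pmf \<mu>))"
proof -
  let ?A = "{xs. set xs \<subseteq> set_pmf \<mu> \<and> length xs = n}"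
  have cA: "countable ?A"
    by (rule countable_subset[of _ "lists (set_pmf \<mu>)"]) (auto simp: countable_set_pmf)
  have "(\<lambda>\<omega>. stake n (smap (rfix \<mu>) \<omega>)) \<in> measurable (stream_space (measure_pmf \<mu>)) (count_space ?A)"
  proof (subst measurable_count_space_eq_countable[OF cA], intro conjI ballI)
    show "(\<lambda>\<omega>. stake n (smap (rfix \<mu>) \<omega>)) \<in> space (stream_space (measure_pmf \<mu>)) \<rightarrow> ?A"
      using rfix_in by auto
  next
    fix xs assume xs: "xs \<in> ?A"
    have eq: "(\<lambda>\<omega>. stake n (smap (rfix \<mu>) \<omega>)) -` {xs} \<inter> space (stream_space (measure_pmf \<mu>))
       = {\<omega>\<in>space (stream_space (measure_pmf \<mu>)). \<forall>i\<in>{..<n}. \<omega> !! i \<in> rfix \<mu> -` {xs ! i}}"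
      using xs by (auto simp: list_eq_iff_nth_eq)
    show "(\<lambda>\<omega>. stake n (smap (rfix \<mu>) \<omega>)) -` {xs} \<inter> space (stream_space (measure_pmf \<mu>))
          \<in> sets (stream_space (measure_pmf \<mu>))"
      unfolding eq
    proof (intro sets.sets_Collect_finite_All)
      fix i
      have "(\<lambda>\<omega>. \<omega> !! i) -` (rfix \<mu> -` {xs ! i}) \<inter> space (stream_space (measure_pmf \<mu>))
            \<in> sets (stream_space (measure_pmf \<mu>))"
        by (rule measurable_sets[OF measurable_snth]) simp
      then show "{\<omega>\<in>space (stream_space (measure_pmf \<mu>)). \<omega> !! i \<in> rfix \<mu> -` {xs ! i}}
            \<in> sets (stream_space (measure_pmf \<mu>))"
        by (simp add: vimage_def Int_def conj_commute)
    qed simp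
  qed
  moreover have "G \<in> borel_measurable (count_space ?A)" by simp
  ultimately show ?thesis by (rule measurable_comp[where g=G, unfolded comp_def])
qed

lemma AE_stake_rfix:
  "AE \<omega> in stream_space (measure_pmf \<mu>). stake n (smap (rfix \<mu>) \<omega>) = stake n \<omega>"
  using AE_streams_pmf[of \<mu>]
proof (rule eventually_mono)
  fix \<omega> assume "\<omega> \<in> streams (set_pmf \<mu>)"
  then have "set (stake n \<omega>) \<subseteq> set_pmf \<mu>"
    by (auto simp: in_set_conv_nth snth_in)
  then show "stake n (smap (rfix \<mu>) \<omega>) = stake n \<omega>"
    by (auto simp: rfix_id intro!: map_idI)
qed

lemma stake_meas_AE:
  fixes G :: "'b list \<Rightarrow> ennreal"
  shows "\<exists>f\<in>borel_measurable (stream_space (measure_pmf \<mu>)).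
     AE \<omega> in stream_space (measure_pmf \<mu>). G (stake n \<omega>) = f \<omega>"
  using meas_stake_rfix[where G=G and n=n and \<mu>=\<mu>] AE_stake_rfix[where \<mu>=\<mu> and n=n]
  by (intro bexI[of _ "\<lambda>\<omega>. G (stake n (smap (rfix \<mu>) \<omega>))"]) (auto elim!: eventually_mono)

lemma nn_integral_stake_cmult:
  fixes G :: "'b list \<Rightarrow> ennreal"
  shows "(\<integral>\<^sup>+\<omega>. c * G (stake n \<omega>) \<partial>stream_space (measure_pmf \<mu>))
        = c * (\<integral>\<^sup>+\<omega>. G (stake n \<omega>) \<partial>stream_space (measure_pmf \<mu>))"
proof -
  obtain f where f: "f \<in> borel_measurable (stream_space (measure_pmf \<mu>))"
    and ae: "AE \<omega> in stream_space (measure_pmf \<mu>). G (stake n \<omega>) = f \<omega>"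
    using stake_meas_AE by blast
  have "(\<integral>\<^sup>+\<omega>. c * G (stake n \<omega>) \<partial>stream_space (measure_pmf \<mu>))
      = (\<integral>\<^sup>+\<omega>. c * f \<omega> \<partial>stream_space (measure_pmf \<mu>))"
    using ae by (intro nn_integral_cong_AE) (auto elim!: eventually_mono)
  also have "\<dots> = c * (\<integral>\<^sup>+\<omega>. f \<omega> \<partial>stream_space (measure_pmf \<mu>))"
    by (rule nn_integral_cmult[OF f])
  also have "(\<integral>\<^sup>+\<omega>. f \<omega> \<partial>stream_space (measure_pmf \<mu>)) = (\<integral>\<^sup>+\<omega>. G (stake n \<omega>) \<partial>stream_space (measure_pmf \<mu>))"
    using ae by (intro nn_integral_cong_AE) (auto elim!: eventually_mono)
  finally show ?thesis .
qed

lemma nn_integral_stake_Suc: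
  fixes G :: "'b list \<Rightarrow> ennreal"
  shows "(\<integral>\<^sup>+\<omega>. G (stake (Suc n) \<omega>) \<partial>stream_space (measure_pmf \<mu>))
        = (\<integral>\<^sup>+g. (\<integral>\<^sup>+X. G (g # stake n X) \<partial>stream_space (measure_pmf \<mu>)) \<partial>measure_pmf \<mu>)"
proof -
  let ?S = "stream_space (measure_pmf \<mu>)"
  have "(\<integral>\<^sup>+\<omega>. G (stake (Suc n) \<omega>) \<partial>?S) = (\<integral>\<^sup>+\<omega>. G (stake (Suc n) (smap (rfix \<mu>) \<omega>)) \<partial>?S)"
    by (intro nn_integral_cong_AE, rule eventually_mono[OF AE_stake_rfix[where \<mu>=\<mu> and n="Suc n"]]) metis
  also have "\<dots> = (\<integral>\<^sup>+g. (\<integral>\<^sup>+X. G (stake (Suc n) (smap (rfix \<mu>) (g ## X))) \<partial>?S) \<partial>measure_pmf \<mu>)"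
    by (rule prob_space.nn_integral_stream_space[OF prob_space_measure_pmf meas_stake_rfix])
  also have "\<dots> = (\<integral>\<^sup>+g. (\<integral>\<^sup>+X. G (rfix \<mu> g # stake n X) \<partial>?S) \<partial>measure_pmf \<mu>)"
  proof (rule nn_integral_cong)
    fix g
    show "(\<integral>\<^sup>+X. G (stake (Suc n) (smap (rfix \<mu>) (g ## X))) \<partial>?S) = (\<integral>\<^sup>+X. G (rfix \<mu> g # stake n X) \<partial>?S)"
      by (intro nn_integral_cong_AE, rule eventually_mono[OF AE_stake_rfix[where \<mu>=\<mu> and n=n]]) simp
  qed
  also have "\<dots> = (\<integral>\<^sup>+g. (\<integral>\<^sup>+X. G (g # stake n X) \<partial>?S) \<partial>measure_pmf \<mu>)"
    using AE_measure_pmf[of \<mu>] by (intro nn_integral_cong_AE) (auto elim!: eventually_mono simp: rfix_id)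
  finally show ?thesis .
qed


lemma K_o: "h \<in> horo_compactification o' \<Longrightarrow> h o' = 0"
proof -
  assume h: "h \<in> horo_compactification o'"
  have "closure (range (\<lambda>x m. dist x m - dist x o')) \<subseteq> {h. h o' = (0::real)}"
    by (rule closure_minimal) (auto intro!: closed_Collect_eq continuous_on_const)
  then show ?thesis using h unfolding horo_compactification_def by auto
qed

lemma K_lip1: "h \<in> horo_compactification o' \<Longrightarrow> h a - h b \<le> dist a b"
proof -
  assume h: "h \<in> horo_compactification o'"
  have "closure (range (\<lambda>x m. dist x m - dist x o')) \<subseteq> {h. h a - h b \<le> dist a b}"
  proof (rule closure_minimal)
    show "range (\<lambda>x m. dist x m - dist x o') \<subseteq> {h. h a - h b \<le> dist a b}"
    proof safe
      fix x
      have "dist x a \<le> dist x b + dist b a" by (rule dist_triangle)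
      then show "(dist x a - dist x o') - (dist x b - dist x o') \<le> dist a b"
        by (simp add: dist_commute)
    qed
    show "closed {h. h a - h b \<le> dist a b}"
      by (intro closed_Collect_le continuous_on_const continuous_on_diff continuous_on_product_coordinates)
  qed
  then show ?thesis using h unfolding horo_compactification_def by auto
qed

lemma K_lip: "h \<in> horo_compactification o' \<Longrightarrow> \<bar>h a - h b\<bar> \<le> dist a b"
  using K_lip1[of h o' a b] K_lip1[of h o' b a] by (auto simp: dist_commute)

lemma isom_inv_app: "isom g \<Longrightarrow> g (inv g m) = m"
  unfolding isom_def by (meson bij_inv_eq_iff)

lemma K_act:
  assumes g: "isom g" and h: "h \<in> horo_compactification o'"
  shows "horo_action o' g h \<in> horo_compactification o'"
proof -
  let ?K = "horo_compactification o'"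
  have "horo_action o' g ` closure (range (\<lambda>x m. dist x m - dist x o')) \<subseteq> ?K"
  proof (rule image_closure_subset)
    show "continuous_on (closure (range (\<lambda>x m. dist x m - dist x o'))) (horo_action o' g)"
      unfolding horo_action_def
      by (intro continuous_on_coordinatewise_then_product continuous_on_diff
          continuous_on_subset[OF continuous_on_product_coordinates]) auto
    show "closed ?K" unfolding horo_compactification_def by simp
    show "horo_action o' g ` range (\<lambda>x m. dist x m - dist x o') \<subseteq> ?K"
    proof safe
      fix x
      have "horo_action o' g (\<lambda>m. dist x m - dist x o') = (\<lambda>m. dist (g x) m - dist (g x) o')"
      proof
        fix m
        have "dist x (inv g m) = dist (g x) m" for m
          using g isom_inv_app[OF g, of m] unfolding isom_def by metis
        then show "horo_action o' g (\<lambda>m. dist x m - dist x o') m = dist (g x) m - dist (g x) o'"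
          unfolding horo_action_def by simp
      qed
      moreover have "(\<lambda>m. dist (g x) m - dist (g x) o') \<in> closure (range (\<lambda>x m. dist x m - dist x o'))"
        by (rule subsetD[OF closure_subset], rule rangeI)
      ultimately show "horo_action o' g (\<lambda>m. dist x m - dist x o') \<in> ?K"
        unfolding horo_compactification_def by simp
    qed
  qed
  then show ?thesis using h unfolding horo_compactification_def by auto
qed

lemma act_comp:
  assumes "bij a" "bij b"
  shows "horo_action o' (a \<circ> b) h = horo_action o' a (horo_action o' b h)"
  using assms by (simp add: horo_action_def o_inv_distrib)

lemma sig_comp:
  assumes "bij a" "bij b"
  shows "busemann o' (a \<circ> b) h = busemann o' b h + busemann o' a (horo_action o' b h)"
  using assms by (simp add: busemann_def horo_action_def o_inv_distrib)

lemma sig_bound: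
  assumes g: "isom g" and h: "h \<in> horo_compactification o'"
  shows "\<bar>busemann o' g h\<bar> \<le> kappa o' g"
proof -
  have "\<bar>busemann o' g h\<bar> = \<bar>h (inv g o') - h o'\<bar>" using K_o[OF h] by (simp add: busemann_def)
  also have "\<dots> \<le> dist (inv g o') o'" by (rule K_lip[OF h])
  also have "\<dots> = dist (g (inv g o')) (g o')" using g unfolding isom_def by simp
  also have "\<dots> = kappa o' g" using isom_inv_app[OF g] by (simp add: kappa_def dist_commute)
  finally show ?thesis .
qed

lemma sig_id: "h \<in> horo_compactification o' \<Longrightarrow> busemann o' id h = 0"
  by (simp add: busemann_def K_o)

lemma act_id: "h \<in> horo_compactification o' \<Longrightarrow> horo_action o' id h = h"
  by (simp add: horo_action_def K_o)


lemma exp_taylor3: "exp (y::real) \<le> 1 + y + y\<^sup>2 / 2 + \<bar>y\<bar> ^ 3 / 6 * exp \<bar>y\<bar>"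
proof -
  obtain s where s: "\<bar>s\<bar> \<le> \<bar>y\<bar>" and e: "exp y = (\<Sum>m<3. (y ^ m) / fact m) + (exp s / fact 3) * y ^ 3"
    using Maclaurin_exp_le[of y 3] by blast
  have sum: "(\<Sum>m<3. (y ^ m) / fact m) = 1 + y + y\<^sup>2 / 2"
    by (simp add: eval_nat_numeral fact_numeral power2_eq_square)
  have "exp s * y ^ 3 \<le> exp \<bar>y\<bar> * \<bar>y\<bar> ^ 3"
  proof -
    have "exp s * y ^ 3 \<le> exp s * \<bar>y\<bar> ^ 3"
      by (intro mult_left_mono) (auto simp: power_abs[symmetric])
    also have "\<dots> \<le> exp \<bar>y\<bar> * \<bar>y\<bar> ^ 3"
      using s by (intro mult_right_mono) auto
    finally show ?thesis .
  qed
  then show ?thesis using e sum by (simp add: fact_numeral mult.commute)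
qed

lemma poly_exp_bound:
  fixes w \<alpha> :: real
  assumes w: "0 \<le> w" and a: "0 < \<alpha>"
  shows "w ^ 3 * exp (\<alpha> * w / 2) \<le> (6 / \<alpha>) ^ 3 * exp (\<alpha> * w)"
proof -
  have "\<alpha> * w / 6 \<le> exp (\<alpha> * w / 6)"
    using exp_ge_add_one_self[of "\<alpha> * w / 6"] by linarith
  then have "(\<alpha> * w / 6) ^ 3 \<le> exp (\<alpha> * w / 6) ^ 3"
    using w a by (intro power_mono) auto
  also have "\<dots> = exp (\<alpha> * w / 2)"
    using exp_of_nat_mult[of 3 "\<alpha> * w / 6"] by simp
  finally have 1: "(\<alpha> * w / 6) ^ 3 \<le> exp (\<alpha> * w / 2)" .
  have "w ^ 3 = (6 / \<alpha>) ^ 3 * (\<alpha> * w / 6) ^ 3"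
    using a by (simp add: power_mult_distrib field_simps)
  also have "\<dots> \<le> (6 / \<alpha>) ^ 3 * exp (\<alpha> * w / 2)"
    using 1 a by (intro mult_left_mono) auto
  finally have "w ^ 3 * exp (\<alpha> * w / 2) \<le> (6 / \<alpha>) ^ 3 * exp (\<alpha> * w / 2) * exp (\<alpha> * w / 2)"
    by (intro mult_right_mono) auto
  also have "\<dots> = (6 / \<alpha>) ^ 3 * exp (\<alpha> * w)"
    by (simp add: exp_add[symmetric] mult.assoc)
  finally show ?thesis .
qed

lemma w_bounds:
  fixes w \<alpha> :: real
  assumes w: "0 \<le> w" and a: "0 < \<alpha>"
  shows "w ^ 3 \<le> (6 / \<alpha>) ^ 3 * exp (\<alpha> * w)"
    and "w\<^sup>2 \<le> 1 + (6 / \<alpha>) ^ 3 * exp (\<alpha> * w)"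
    and "w \<le> 2 + (6 / \<alpha>) ^ 3 * exp (\<alpha> * w)"
proof -
  have "w ^ 3 \<le> w ^ 3 * exp (\<alpha> * w / 2)"
  proof -
    have "1 \<le> exp (\<alpha> * w / 2)" using w a by simp
    then have "w ^ 3 * 1 \<le> w ^ 3 * exp (\<alpha> * w / 2)" using w by (intro mult_left_mono) auto
    then show ?thesis by simp
  qed
  then show 3: "w ^ 3 \<le> (6 / \<alpha>) ^ 3 * exp (\<alpha> * w)" using poly_exp_bound[OF w a] by linarith
  have "w\<^sup>2 \<le> 1 + w ^ 3"
  proof (cases "w \<le> 1")
    case True
    then have "w\<^sup>2 \<le> 1" using w by (simp add: power_le_one)
    moreover have "0 \<le> w ^ 3" using w by simp
    ultimately show ?thesis by linarith
  next
    case False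
    then have "w\<^sup>2 * 1 \<le> w\<^sup>2 * w" by (intro mult_left_mono) auto
    then show ?thesis by (simp add: power2_eq_square power3_eq_cube)
  qed
  then show 2: "w\<^sup>2 \<le> 1 + (6 / \<alpha>) ^ 3 * exp (\<alpha> * w)" using 3 by linarith
  have "w \<le> 1 + w\<^sup>2"
  proof -
    have "0 \<le> (w - 1)\<^sup>2" by simp
    then have "0 \<le> w\<^sup>2 - 2 * w + 1" by (simp add: power2_diff)
    then show ?thesis using w by (simp add: power2_eq_square)
  qed
  then show "w \<le> 2 + (6 / \<alpha>) ^ 3 * exp (\<alpha> * w)" using 2 by linarith
qed


lemma dom_integrable:
  fixes \<mu> :: "'b pmf" and Y W :: "'b \<Rightarrow> real"
  assumes a: "0 < \<alpha>"
    and dom: "AE g in measure_pmf \<mu>. \<bar>Y g\<bar> \<le> W g"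
    and int: "integrable (measure_pmf \<mu>) (\<lambda>g. exp (\<alpha> * W g))"
  shows "integrable (measure_pmf \<mu>) Y"
    and "integrable (measure_pmf \<mu>) (\<lambda>g. (Y g)\<^sup>2)"
    and "measure_pmf.expectation \<mu> (\<lambda>g. (Y g)\<^sup>2) \<le>
           1 + (6 / \<alpha>) ^ 3 * measure_pmf.expectation \<mu> (\<lambda>g. exp (\<alpha> * W g))"
proof -
  let ?M = "(6 / \<alpha>) ^ 3"
  have i1: "integrable (measure_pmf \<mu>) (\<lambda>g. 2 + ?M * exp (\<alpha> * W g))"
    using int by (intro Bochner_Integration.integrable_add integrable_mult_right) auto
  have i2: "integrable (measure_pmf \<mu>) (\<lambda>g. 1 + ?M * exp (\<alpha> * W g))"
    using int by (intro Bochner_Integration.integrable_add integrable_mult_right) auto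
  have pos: "0 \<le> ?M * exp (\<alpha> * W g)" for g using a by simp
  show "integrable (measure_pmf \<mu>) Y"
  proof (rule Bochner_Integration.integrable_bound[OF i1])
    show "Y \<in> borel_measurable (measure_pmf \<mu>)" by simp
    show "AE g in measure_pmf \<mu>. norm (Y g) \<le> norm (2 + ?M * exp (\<alpha> * W g))"
      using dom
    proof (rule eventually_mono)
      fix g assume "\<bar>Y g\<bar> \<le> W g"
      moreover have "W g \<le> 2 + ?M * exp (\<alpha> * W g)"
        using w_bounds(3)[of "W g" \<alpha>] a \<open>\<bar>Y g\<bar> \<le> W g\<close> by linarith
      ultimately show "norm (Y g) \<le> norm (2 + ?M * exp (\<alpha> * W g))" using pos[of g] by simp
    qed
  qed
  have b2: "AE g in measure_pmf \<mu>. (Y g)\<^sup>2 \<le> 1 + ?M * exp (\<alpha> * W g)"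
    using dom
  proof (rule eventually_mono)
    fix g assume h: "\<bar>Y g\<bar> \<le> W g"
    then have "(Y g)\<^sup>2 \<le> (W g)\<^sup>2"
      by (metis abs_ge_zero order_trans power2_abs power_mono)
    then show "(Y g)\<^sup>2 \<le> 1 + ?M * exp (\<alpha> * W g)"
      using w_bounds(2)[of "W g" \<alpha>] a h by linarith
  qed
  show i3: "integrable (measure_pmf \<mu>) (\<lambda>g. (Y g)\<^sup>2)"
  proof (rule Bochner_Integration.integrable_bound[OF i2])
    show "(\<lambda>g. (Y g)\<^sup>2) \<in> borel_measurable (measure_pmf \<mu>)" by simp
    show "AE g in measure_pmf \<mu>. norm ((Y g)\<^sup>2) \<le> norm (1 + ?M * exp (\<alpha> * W g))"
      using b2 by (rule eventually_mono) (use pos in auto)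
  qed
  have "measure_pmf.expectation \<mu> (\<lambda>g. (Y g)\<^sup>2) \<le> measure_pmf.expectation \<mu> (\<lambda>g. 1 + ?M * exp (\<alpha> * W g))"
    by (rule integral_mono_AE[OF i3 i2 b2])
  also have "\<dots> = 1 + ?M * measure_pmf.expectation \<mu> (\<lambda>g. exp (\<alpha> * W g))"
    using int by (subst Bochner_Integration.integral_add) auto
  finally show "measure_pmf.expectation \<mu> (\<lambda>g. (Y g)\<^sup>2) \<le> 1 + ?M * measure_pmf.expectation \<mu> (\<lambda>g. exp (\<alpha> * W g))" .
qed

lemma mgf_bound:
  fixes \<mu> :: "'b pmf" and Y W :: "'b \<Rightarrow> real"
  assumes a: "0 < \<alpha>"
    and dom: "AE g in measure_pmf \<mu>. \<bar>Y g\<bar> \<le> W g"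
    and int: "integrable (measure_pmf \<mu>) (\<lambda>g. exp (\<alpha> * W g))"
    and mean: "measure_pmf.expectation \<mu> Y = 0"
    and var: "measure_pmf.expectation \<mu> (\<lambda>g. (Y g)\<^sup>2) \<le> v"
    and t1: "\<bar>t\<bar> \<le> \<alpha> / 2"
    and t2: "\<bar>t\<bar> * ((6 / \<alpha>) ^ 3 * measure_pmf.expectation \<mu> (\<lambda>g. exp (\<alpha> * W g))) \<le> 3 * \<epsilon>"
  shows "(\<integral>\<^sup>+g. ennreal (exp (t * Y g)) \<partial>measure_pmf \<mu>) \<le> ennreal (exp (t\<^sup>2 * (v + \<epsilon>) / 2))"
proof -
  let ?M = "(6 / \<alpha>) ^ 3"
  let ?E = "measure_pmf.expectation \<mu> (\<lambda>g. exp (\<alpha> * W g))"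
  define Q where "Q g = \<bar>Y g\<bar> ^ 3 * exp (\<bar>t\<bar> * \<bar>Y g\<bar>)" for g
  define R where "R g = 1 + t * Y g + (t\<^sup>2 / 2) * (Y g)\<^sup>2 + (\<bar>t\<bar> ^ 3 / 6) * Q g" for g
  note iY = dom_integrable(1)[OF a dom int]
  note iY2 = dom_integrable(2)[OF a dom int]
  have iM: "integrable (measure_pmf \<mu>) (\<lambda>g. ?M * exp (\<alpha> * W g))"
    using int by auto
  have bQ: "AE g in measure_pmf \<mu>. Q g \<le> ?M * exp (\<alpha> * W g)"
    using dom
  proof (rule eventually_mono)
    fix g assume h: "\<bar>Y g\<bar> \<le> W g"
    have "\<bar>Y g\<bar> ^ 3 \<le> W g ^ 3" using h by (intro power_mono) auto
    moreover have "exp (\<bar>t\<bar> * \<bar>Y g\<bar>) \<le> exp (\<alpha> * W g / 2)"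
    proof -
      have "\<bar>t\<bar> * \<bar>Y g\<bar> \<le> (\<alpha> / 2) * W g"
        using h t1 by (intro mult_mono) auto
      then show ?thesis by simp
    qed
    ultimately have "Q g \<le> W g ^ 3 * exp (\<alpha> * W g / 2)"
      unfolding Q_def using h by (intro mult_mono) auto
    also have "\<dots> \<le> ?M * exp (\<alpha> * W g)"
      using poly_exp_bound[of "W g" \<alpha>] h a by linarith
    finally show "Q g \<le> ?M * exp (\<alpha> * W g)" .
  qed
  have iQ: "integrable (measure_pmf \<mu>) Q"
  proof (rule Bochner_Integration.integrable_bound[OF iM])
    show "Q \<in> borel_measurable (measure_pmf \<mu>)" by simp
    show "AE g in measure_pmf \<mu>. norm (Q g) \<le> norm (?M * exp (\<alpha> * W g))"
      using bQ by (rule eventually_mono) (auto simp: Q_def)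
  qed
  have iR: "integrable (measure_pmf \<mu>) R"
    unfolding R_def using iY iY2 iQ
    by (intro Bochner_Integration.integrable_add integrable_mult_right) auto
  have ER: "measure_pmf.expectation \<mu> R
      = 1 + t * measure_pmf.expectation \<mu> Y + (t\<^sup>2 / 2) * measure_pmf.expectation \<mu> (\<lambda>g. (Y g)\<^sup>2)
          + (\<bar>t\<bar> ^ 3 / 6) * measure_pmf.expectation \<mu> Q"
    unfolding R_def using iY iY2 iQ
    by (simp add: Bochner_Integration.integral_add integrable_mult_right)
  have EQ: "measure_pmf.expectation \<mu> Q \<le> ?M * ?E"
    using integral_mono_AE[OF iQ iM bQ] by simp
  have pw: "exp (t * Y g) \<le> R g" for g
  proof -
    have "exp (t * Y g) \<le> 1 + t * Y g + (t * Y g)\<^sup>2 / 2 + \<bar>t * Y g\<bar> ^ 3 / 6 * exp \<bar>t * Y g\<bar>"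
      by (rule exp_taylor3)
    also have "\<dots> = R g"
      by (simp add: R_def Q_def power_mult_distrib abs_mult)
    finally show ?thesis .
  qed
  have "(\<integral>\<^sup>+g. ennreal (exp (t * Y g)) \<partial>measure_pmf \<mu>) \<le> (\<integral>\<^sup>+g. ennreal (R g) \<partial>measure_pmf \<mu>)"
    by (intro nn_integral_mono ennreal_leI pw)
  also have "\<dots> = ennreal (measure_pmf.expectation \<mu> R)"
  proof (rule nn_integral_eq_integral[OF iR])
    show "AE g in measure_pmf \<mu>. 0 \<le> R g"
      by (intro AE_I2) (metis exp_ge_zero order_trans pw)
  qed
  also have "\<dots> \<le> ennreal (exp (t\<^sup>2 * (v + \<epsilon>) / 2))"
  proof (rule ennreal_leI)
    have "(\<bar>t\<bar> ^ 3 / 6) * measure_pmf.expectation \<mu> Q \<le> (\<bar>t\<bar> ^ 3 / 6) * (?M * ?E)"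
      using EQ by (intro mult_left_mono) auto
    also have "\<dots> = (t\<^sup>2 / 6) * (\<bar>t\<bar> * (?M * ?E))"
      by (simp add: power2_eq_square power3_eq_cube)
    also have "\<dots> \<le> (t\<^sup>2 / 6) * (3 * \<epsilon>)"
      using t2 by (intro mult_left_mono) auto
    finally have c: "(\<bar>t\<bar> ^ 3 / 6) * measure_pmf.expectation \<mu> Q \<le> t\<^sup>2 * \<epsilon> / 2" by (simp add: mult_ac)
    have d: "(t\<^sup>2 / 2) * measure_pmf.expectation \<mu> (\<lambda>g. (Y g)\<^sup>2) \<le> (t\<^sup>2 / 2) * v"
      using var by (intro mult_left_mono) auto
    have "measure_pmf.expectation \<mu> R \<le> 1 + t\<^sup>2 * (v + \<epsilon>) / 2"
      using ER c d mean by (simp add: algebra_simps)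
    also have "\<dots> \<le> exp (t\<^sup>2 * (v + \<epsilon>) / 2)"
      using exp_ge_add_one_self by (metis add.commute)
    finally show "measure_pmf.expectation \<mu> R \<le> exp (t\<^sup>2 * (v + \<epsilon>) / 2)" .
  qed
  finally show ?thesis .
qed


lemma act_id': "h \<in> horo_compactification o' \<Longrightarrow> horo_action o' (\<lambda>a. a) h = h"
  unfolding id_def[symmetric] by (rule act_id)
lemma sig_id': "h \<in> horo_compactification o' \<Longrightarrow> busemann o' (\<lambda>a. a) h = 0"
  unfolding id_def[symmetric] by (rule sig_id)

lemma wl_props:
  assumes isoms: "\<forall>g\<in>set_pmf \<mu>. isom g" and xs: "set xs \<subseteq> set_pmf \<mu>"
  shows "bij (wl xs)"
    and "x \<in> horo_compactification o' \<Longrightarrow> horo_action o' (wl xs) x \<in> horo_compactification o'"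
proof -
  have "bij (wl xs) \<and> (\<forall>x\<in>horo_compactification o'. horo_action o' (wl xs) x \<in> horo_compactification o')"
    using xs
  proof (induction xs)
    case Nil
    then show ?case by (simp add: act_id act_id' bij_id[unfolded id_def])
  next
    case (Cons g xs)
    then have g: "isom g" and ih: "bij (wl xs)" "\<forall>x\<in>horo_compactification o'. horo_action o' (wl xs) x \<in> horo_compactification o'"
      using isoms by auto
    have bg: "bij g" using g by (simp add: isom_def)
    show ?case
      unfolding wl_Cons
    proof (intro conjI ballI)
      show "bij (wl xs \<circ> g)" by (rule bij_comp[OF bg ih(1)])
      fix x assume "x \<in> horo_compactification o'"
      then show "horo_action o' (wl xs \<circ> g) x \<in> horo_compactification o'"
        unfolding act_comp[OF ih(1) bg] using ih(2) K_act[OF g] by blast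
    qed
  qed
  then show "bij (wl xs)" "x \<in> horo_compactification o' \<Longrightarrow> horo_action o' (wl xs) x \<in> horo_compactification o'"
    by auto
qed

lemma AE_stake_in:
  "AE \<omega> in stream_space (measure_pmf \<mu>). set (stake n \<omega>) \<subseteq> set_pmf \<mu>"
  using AE_streams_pmf[of \<mu>] by (rule eventually_mono) (auto simp: in_set_conv_nth snth_in)

lemma walk_bound:
  fixes \<mu> :: "('a::metric_space \<Rightarrow> 'a) pmf"
  assumes isoms: "\<forall>g\<in>set_pmf \<mu>. isom g"
    and mgf: "\<forall>\<xi>\<in>horo_compactification o'.
       (\<integral>\<^sup>+g. ennreal (exp (t * (busemann0 o' \<psi> g \<xi> - ell))) \<partial>measure_pmf \<mu>) \<le> ennreal A"
    and A: "0 \<le> A"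
  shows "\<forall>x\<in>horo_compactification o'.
     (\<integral>\<^sup>+\<omega>. ennreal (exp (t * (busemann o' (wl (stake n \<omega>)) x + \<psi> (horo_action o' (wl (stake n \<omega>)) x)
         - \<psi> x - real n * ell))) \<partial>stream_space (measure_pmf \<mu>)) \<le> ennreal (A ^ n)"
proof (induction n)
  case 0
  interpret S: prob_space "stream_space (measure_pmf \<mu>)"
    by (rule prob_space.prob_space_stream_space[OF prob_space_measure_pmf])
  show ?case
    by (simp add: sig_id act_id sig_id' act_id' S.emeasure_space_1)
next
  case (Suc n)
  let ?S = "stream_space (measure_pmf \<mu>)"
  let ?K = "horo_compactification o'"
  show ?case
  proof
    fix x assume x: "x \<in> ?K"
    define G where "G xs = ennreal (exp (t * (busemann o' (wl xs) x + \<psi> (horo_action o' (wl xs) x)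
         - \<psi> x - real (Suc n) * ell)))" for xs
    define H where "H y xs = ennreal (exp (t * (busemann o' (wl xs) y + \<psi> (horo_action o' (wl xs) y)
         - \<psi> y - real n * ell)))" for y xs
    have "(\<integral>\<^sup>+\<omega>. G (stake (Suc n) \<omega>) \<partial>?S) = (\<integral>\<^sup>+g. (\<integral>\<^sup>+X. G (g # stake n X) \<partial>?S) \<partial>measure_pmf \<mu>)"
      by (rule nn_integral_stake_Suc)
    also have "\<dots> \<le> (\<integral>\<^sup>+g. ennreal (exp (t * (busemann0 o' \<psi> g x - ell))) * ennreal (A ^ n) \<partial>measure_pmf \<mu>)"
    proof (rule nn_integral_mono_AE, rule eventually_mono[OF AE_measure_pmf])
      fix g assume gS: "g \<in> set_pmf \<mu>"
      have g: "isom g" using gS isoms by auto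
      have bg: "bij g" using g by (simp add: isom_def)
      have gx: "horo_action o' g x \<in> ?K" by (rule K_act[OF g x])
      have "(\<integral>\<^sup>+X. G (g # stake n X) \<partial>?S)
          = (\<integral>\<^sup>+X. ennreal (exp (t * (busemann0 o' \<psi> g x - ell))) * H (horo_action o' g x) (stake n X) \<partial>?S)"
      proof (rule nn_integral_cong_AE, rule eventually_mono[OF AE_stake_in])
        fix X assume XS: "set (stake n X) \<subseteq> set_pmf \<mu>"
        have ba: "bij (wl (stake n X))" by (rule wl_props(1)[OF isoms XS])
        show "G (g # stake n X) = ennreal (exp (t * (busemann0 o' \<psi> g x - ell))) * H (horo_action o' g x) (stake n X)"
          unfolding G_def H_def wl_Cons busemann0_def
          using ba bg
          by (simp add: sig_comp act_comp ennreal_mult[symmetric] exp_add[symmetric] algebra_simps)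
      qed
      also have "\<dots> = ennreal (exp (t * (busemann0 o' \<psi> g x - ell))) * (\<integral>\<^sup>+X. H (horo_action o' g x) (stake n X) \<partial>?S)"
        by (rule nn_integral_stake_cmult)
      also have "\<dots> \<le> ennreal (exp (t * (busemann0 o' \<psi> g x - ell))) * ennreal (A ^ n)"
        using Suc.IH gx unfolding H_def by (intro mult_left_mono) auto
      finally show "(\<integral>\<^sup>+X. G (g # stake n X) \<partial>?S) \<le> ennreal (exp (t * (busemann0 o' \<psi> g x - ell))) * ennreal (A ^ n)" .
    qed
    also have "\<dots> = (\<integral>\<^sup>+g. ennreal (exp (t * (busemann0 o' \<psi> g x - ell))) \<partial>measure_pmf \<mu>) * ennreal (A ^ n)"
      by (rule nn_integral_multc) simp
    also have "\<dots> \<le> ennreal A * ennreal (A ^ n)"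
      using mgf x by (intro mult_right_mono) auto
    also have "\<dots> = ennreal (A ^ Suc n)"
      using A by (simp add: ennreal_mult[symmetric])
    finally show "(\<integral>\<^sup>+\<omega>. ennreal (exp (t * (busemann o' (wl (stake (Suc n) \<omega>)) x + \<psi> (horo_action o' (wl (stake (Suc n) \<omega>)) x)
         - \<psi> x - real (Suc n) * ell))) \<partial>?S) \<le> ennreal (A ^ Suc n)"
      unfolding G_def .
  qed
qed

theorem proposition4p4:
  fixes o' :: "'a::metric_space" and \<mu> :: "('a \<Rightarrow> 'a) pmf"
    and \<psi> :: "('a \<Rightarrow> real) \<Rightarrow> real" and ell :: real
  assumes sep: "separable_space TYPE('a)"
    and geod: "geodesic_space TYPE('a)"
    and hyp: "gromov_hyperbolic o'"
    and isoms: "\<forall>g\<in>set_pmf \<mu>. isom g"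
    and nonel: "non_elementary o' \<mu>"
    and expm: "finite_exp_moment o' \<mu>"
    and drift: "AE \<omega> in stream_space (measure_pmf \<mu>).
                  (\<lambda>n. kappa o' (walk n \<omega>) / real n) \<longlonglongrightarrow> ell"
    and psi_bdd: "bounded (\<psi> ` horo_compactification o')"
    and psi_meas: "\<psi> \<in> borel_measurable (restrict_space borel (horo_compactification o'))"
    and psi_cent: "\<forall>x\<in>horo_compactification o'.
                    measure_pmf.expectation \<mu> (\<lambda>g. busemann0 o' \<psi> g x) = ell"
  shows "let v = (SUP \<xi>\<in>horo_compactification o'.
                    measure_pmf.expectation \<mu> (\<lambda>g. (busemann0 o' \<psi> g \<xi> - ell)\<^sup>2))
         in \<exists>C>0. \<forall>\<epsilon>>0. \<exists>b>0. \<forall>t::real. \<bar>t\<bar> < v / b \<longrightarrow>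
              (\<forall>n::nat. \<forall>x\<in>horo_compactification o'.
                 (\<integral>\<^sup>+ \<omega>. ennreal (exp (t * (busemann o' (walk n \<omega>) x - real n * ell)))
                    \<partial>stream_space (measure_pmf \<mu>))
                 \<le> ennreal (exp (t\<^sup>2 * (v + \<epsilon>) * real n / 2 + C * \<bar>t\<bar>)))"
proof -
  let ?K = "horo_compactification o'"
  let ?SS = "stream_space (measure_pmf \<mu>)"
  define Y where "Y \<xi> g = busemann0 o' \<psi> g \<xi> - ell" for \<xi> g
  define v where "v = (SUP \<xi>\<in>?K. measure_pmf.expectation \<mu> (\<lambda>g. (busemann0 o' \<psi> g \<xi> - ell)\<^sup>2))"
  obtain B where B: "\<forall>y\<in>\<psi> ` ?K. norm y \<le> B"
    using psi_bdd unfolding bounded_iff by blast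
  define B0 where "B0 = \<bar>B\<bar>"
  have B0: "\<bar>\<psi> x\<bar> \<le> B0" if "x \<in> ?K" for x
    using B that unfolding B0_def by fastforce
  obtain \<alpha> where a: "0 < \<alpha>" and fin: "(\<integral>\<^sup>+ g. ennreal (exp (\<alpha> * kappa o' g)) \<partial>measure_pmf \<mu>) < \<infinity>"
    using expm unfolding finite_exp_moment_def by blast
  define W where "W g = kappa o' g + 2 * B0 + \<bar>ell\<bar>" for g
  define M where "M = (6 / \<alpha>) ^ 3"
  define E where "E = measure_pmf.expectation \<mu> (\<lambda>g. exp (\<alpha> * W g))"
  have ik: "integrable (measure_pmf \<mu>) (\<lambda>g. exp (\<alpha> * kappa o' g))"
    by (rule integrableI_bounded) (use fin in simp_all)
  have iW: "integrable (measure_pmf \<mu>) (\<lambda>g. exp (\<alpha> * W g))"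
  proof -
    have "(\<lambda>g. exp (\<alpha> * W g)) = (\<lambda>g. exp (\<alpha> * (2 * B0 + \<bar>ell\<bar>)) * exp (\<alpha> * kappa o' g))"
      by (auto simp: W_def exp_add[symmetric] algebra_simps)
    then show ?thesis using ik by simp
  qed
  have dom: "AE g in measure_pmf \<mu>. \<bar>Y \<xi> g\<bar> \<le> W g" if \<xi>: "\<xi> \<in> ?K" for \<xi>
    using AE_measure_pmf[of \<mu>]
  proof (rule eventually_mono)
    fix g assume "g \<in> set_pmf \<mu>"
    then have g: "isom g" using isoms by auto
    have "\<bar>busemann o' g \<xi>\<bar> \<le> kappa o' g" by (rule sig_bound[OF g \<xi>])
    moreover have "\<bar>\<psi> (horo_action o' g \<xi>)\<bar> \<le> B0" by (rule B0[OF K_act[OF g \<xi>]])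
    moreover have "\<bar>\<psi> \<xi>\<bar> \<le> B0" by (rule B0[OF \<xi>])
    ultimately show "\<bar>Y \<xi> g\<bar> \<le> W g"
      unfolding Y_def W_def busemann0_def by linarith
  qed
  have varb: "measure_pmf.expectation \<mu> (\<lambda>g. (Y \<xi> g)\<^sup>2) \<le> 1 + M * E" if "\<xi> \<in> ?K" for \<xi>
    using dom_integrable(3)[OF a dom[OF that] iW] unfolding M_def E_def .
  have bdd: "bdd_above ((\<lambda>\<xi>. measure_pmf.expectation \<mu> (\<lambda>g. (busemann0 o' \<psi> g \<xi> - ell)\<^sup>2)) ` ?K)"
    using varb unfolding Y_def by (intro bdd_aboveI2) auto
  have var: "measure_pmf.expectation \<mu> (\<lambda>g. (Y \<xi> g)\<^sup>2) \<le> v" if "\<xi> \<in> ?K" for \<xi>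
    unfolding v_def Y_def by (rule cSUP_upper[OF that bdd])
  have mean: "measure_pmf.expectation \<mu> (Y \<xi>) = 0" if \<xi>: "\<xi> \<in> ?K" for \<xi>
  proof -
    have iY: "integrable (measure_pmf \<mu>) (Y \<xi>)" by (rule dom_integrable(1)[OF a dom[OF \<xi>] iW])
    have "integrable (measure_pmf \<mu>) (\<lambda>g. Y \<xi> g + ell)" using iY by simp
    then have ib: "integrable (measure_pmf \<mu>) (\<lambda>g. busemann0 o' \<psi> g \<xi>)" by (simp add: Y_def)
    have "measure_pmf.expectation \<mu> (Y \<xi>) = measure_pmf.expectation \<mu> (\<lambda>g. busemann0 o' \<psi> g \<xi>) - ell"
      unfolding Y_def using ib by (subst Bochner_Integration.integral_diff) auto
    then show ?thesis using psi_cent \<xi> by simp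
  qed
  have E0: "0 \<le> E" unfolding E_def by (rule integral_nonneg_AE) auto
  have M0: "0 \<le> M" unfolding M_def using a by simp
  define C where "C = 2 * B0 + 1"
  have main: "\<exists>C>0. \<forall>\<epsilon>>0. \<exists>b>0. \<forall>t::real. \<bar>t\<bar> < v / b \<longrightarrow>
              (\<forall>n::nat. \<forall>x\<in>horo_compactification o'.
                 (\<integral>\<^sup>+ \<omega>. ennreal (exp (t * (busemann o' (walk n \<omega>) x - real n * ell)))
                    \<partial>stream_space (measure_pmf \<mu>))
                 \<le> ennreal (exp (t\<^sup>2 * (v + \<epsilon>) * real n / 2 + C * \<bar>t\<bar>)))"
  proof (rule exI[of _ C], intro conjI allI impI)
    show "0 < C" unfolding C_def B0_def by simp
    fix \<epsilon> :: real assume eps: "0 < \<epsilon>"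
    define t0 where "t0 = min (\<alpha> / 2) (3 * \<epsilon> / (M * E + 1))"
    have ME: "0 < M * E + 1" using M0 E0 by (simp add: add_nonneg_pos)
    have t0: "0 < t0" unfolding t0_def using a eps ME by simp
    define b where "b = (if 0 < v then v / t0 else 1)"
    show "\<exists>b>0. \<forall>t. \<bar>t\<bar> < v / b \<longrightarrow> (\<forall>n. \<forall>x\<in>?K.
        (\<integral>\<^sup>+ \<omega>. ennreal (exp (t * (busemann o' (walk n \<omega>) x - real n * ell))) \<partial>?SS)
           \<le> ennreal (exp (t\<^sup>2 * (v + \<epsilon>) * real n / 2 + C * \<bar>t\<bar>)))"
    proof (intro exI[of _ b] conjI allI impI ballI)
      show "0 < b" unfolding b_def using t0 by simp
      fix t :: real and n :: nat and x
      assume tb: "\<bar>t\<bar> < v / b" and x: "x \<in> ?K"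
      have vpos: "0 < v" and tt0: "\<bar>t\<bar> < t0"
      proof -
        show "0 < v"
        proof (rule ccontr)
          assume "\<not> 0 < v" then show False using tb by (simp add: b_def)
        qed
        then show "\<bar>t\<bar> < t0" using tb t0 by (simp add: b_def)
      qed
      have t1: "\<bar>t\<bar> \<le> \<alpha> / 2" using tt0 unfolding t0_def by simp
      have t2: "\<bar>t\<bar> * (M * E) \<le> 3 * \<epsilon>"
      proof -
        have "\<bar>t\<bar> \<le> 3 * \<epsilon> / (M * E + 1)" using tt0 unfolding t0_def by simp
        then have "\<bar>t\<bar> * (M * E + 1) \<le> 3 * \<epsilon>" using ME by (simp add: pos_le_divide_eq)
        moreover have "\<bar>t\<bar> * (M * E) \<le> \<bar>t\<bar> * (M * E + 1)" by (intro mult_left_mono) auto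
        ultimately show ?thesis by linarith
      qed
      define A where "A = exp (t\<^sup>2 * (v + \<epsilon>) / 2)"
      have mgf: "\<forall>\<xi>\<in>?K. (\<integral>\<^sup>+g. ennreal (exp (t * (busemann0 o' \<psi> g \<xi> - ell))) \<partial>measure_pmf \<mu>) \<le> ennreal A"
      proof
        fix \<xi> assume \<xi>: "\<xi> \<in> ?K"
        show "(\<integral>\<^sup>+g. ennreal (exp (t * (busemann0 o' \<psi> g \<xi> - ell))) \<partial>measure_pmf \<mu>) \<le> ennreal A"
          using mgf_bound[OF a dom[OF \<xi>] iW mean[OF \<xi>] var[OF \<xi>] t1 t2[unfolded M_def E_def]]
          unfolding A_def Y_def .
      qed
      have wb: "(\<integral>\<^sup>+\<omega>. ennreal (exp (t * (busemann o' (wl (stake n \<omega>)) x + \<psi> (horo_action o' (wl (stake n \<omega>)) x)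
         - \<psi> x - real n * ell))) \<partial>?SS) \<le> ennreal (A ^ n)"
        using walk_bound[OF isoms mgf, of n] x unfolding A_def by auto
      have "(\<integral>\<^sup>+ \<omega>. ennreal (exp (t * (busemann o' (walk n \<omega>) x - real n * ell))) \<partial>?SS)
         \<le> (\<integral>\<^sup>+\<omega>. ennreal (exp (2 * B0 * \<bar>t\<bar>)) * ennreal (exp (t * (busemann o' (wl (stake n \<omega>)) x + \<psi> (horo_action o' (wl (stake n \<omega>)) x)
         - \<psi> x - real n * ell))) \<partial>?SS)"
      proof (rule nn_integral_mono_AE, rule eventually_mono[OF AE_stake_in])
        fix \<omega> assume \<omega>: "set (stake n \<omega>) \<subseteq> set_pmf \<mu>"
        have k: "horo_action o' (wl (stake n \<omega>)) x \<in> ?K" by (rule wl_props(2)[OF isoms \<omega> x])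
        have d: "\<bar>\<psi> (horo_action o' (wl (stake n \<omega>)) x) - \<psi> x\<bar> \<le> 2 * B0"
          using B0[OF k] B0[OF x] by linarith
        have "- (t * (\<psi> (horo_action o' (wl (stake n \<omega>)) x) - \<psi> x)) \<le> \<bar>t\<bar> * (2 * B0)"
          using d by (metis abs_ge_minus_self abs_mult abs_ge_zero mult_left_mono order_trans)
        then have "t * (busemann o' (walk n \<omega>) x - real n * ell) \<le> 2 * B0 * \<bar>t\<bar> + t * (busemann o' (wl (stake n \<omega>)) x + \<psi> (horo_action o' (wl (stake n \<omega>)) x)
         - \<psi> x - real n * ell)"
          by (simp add: walk_wl algebra_simps)
        then show "ennreal (exp (t * (busemann o' (walk n \<omega>) x - real n * ell))) \<le> ennreal (exp (2 * B0 * \<bar>t\<bar>)) * ennreal (exp (t * (busemann o' (wl (stake n \<omega>)) x + \<psi> (horo_action o' (wl (stake n \<omega>)) x)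
         - \<psi> x - real n * ell)))"
          by (simp add: ennreal_mult[symmetric] exp_add[symmetric])
      qed
      also have "\<dots> = ennreal (exp (2 * B0 * \<bar>t\<bar>)) * (\<integral>\<^sup>+\<omega>. ennreal (exp (t * (busemann o' (wl (stake n \<omega>)) x + \<psi> (horo_action o' (wl (stake n \<omega>)) x)
         - \<psi> x - real n * ell))) \<partial>?SS)"
        by (rule nn_integral_stake_cmult[where G="\<lambda>xs. ennreal (exp (t * (busemann o' (wl xs) x + \<psi> (horo_action o' (wl xs) x) - \<psi> x - real n * ell)))"])
      also have "\<dots> \<le> ennreal (exp (2 * B0 * \<bar>t\<bar>)) * ennreal (A ^ n)"
        by (rule mult_left_mono[OF wb]) simp
      also have "\<dots> = ennreal (exp (2 * B0 * \<bar>t\<bar>) * exp (real n * (t\<^sup>2 * (v + \<epsilon>) / 2)))"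
        unfolding A_def exp_of_nat_mult[of n "t\<^sup>2 * (v + \<epsilon>) / 2"] by (simp add: ennreal_mult[symmetric])
      also have "\<dots> \<le> ennreal (exp (t\<^sup>2 * (v + \<epsilon>) * real n / 2 + C * \<bar>t\<bar>))"
      proof (rule ennreal_leI)
        have "2 * B0 * \<bar>t\<bar> + real n * (t\<^sup>2 * (v + \<epsilon>) / 2) \<le> t\<^sup>2 * (v + \<epsilon>) * real n / 2 + C * \<bar>t\<bar>"
          unfolding C_def by (simp add: algebra_simps)
        then show "exp (2 * B0 * \<bar>t\<bar>) * exp (real n * (t\<^sup>2 * (v + \<epsilon>) / 2)) \<le> exp (t\<^sup>2 * (v + \<epsilon>) * real n / 2 + C * \<bar>t\<bar>)"
          by (simp add: exp_add[symmetric])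
      qed
      finally show "(\<integral>\<^sup>+ \<omega>. ennreal (exp (t * (busemann o' (walk n \<omega>) x - real n * ell))) \<partial>?SS)
           \<le> ennreal (exp (t\<^sup>2 * (v + \<epsilon>) * real n / 2 + C * \<bar>t\<bar>))" .
    qed
  qed
  then show ?thesis unfolding Let_def v_def .
qed

end
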